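(* Consider the permanently Colored Magnetic Tower of Hanoi with $N\ge 1$ disks, posts $S$ (source), $I$ (intermediate), $D$ (destination), where $S$ is colored Red, $D$ is colored Blue, and $I$ is colored either Blue or Red (both versions). Then the minimum number of moves needed to transfer all $N$ disks from $S$ to $D$ is $$S_{100}(N)=\sum_{k=1}^N 3^{k-1}=\frac{3^N-1}{2},$$ and in such a minimal solution disk $k$ (disks numbered $1,\dots,N$ from largest to smallest) is moved exactly $P_{100}(k)=3^{k-1}$ times.
   Context: Magnetic Tower of Hanoi (MToH): there are three posts and $N$ disks of distinct diameters, numbered $1$ (largest) to $N$ (smallest). Each disk has two faces, one Red and one Blue. Initially all $N$ disks are stacked on the source post $S$ in decreasing size from bottom to top, each with its Red face up (Blue face down). A move consists of lifting the top disk of some post, turning it upside down, and placing it on top of another post. Rules: (Size rule) a disk may never be placed on a smaller disk; (Magnet rule) a disk may never be placed so that its downward-facing side has the same color as the upward-facing side of the disk it lands on. The puzzle is solved when all $N$ disks are on the destination post $D$ (one of the two initially empty posts) in decreasing size from bottom to top. In the permanently Colored MToH, each post additionally carries a fixed color, and any disk lying on a post (whether or not the post contains other disks) must have its upward-facing side of that post's color. *)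

theory Defs
  imports Main
begin

datatype post = S | I | D
datatype color = Red | Blue

fun flip :: "color \<Rightarrow> color" where
  "flip Red = Blue" | "flip Blue = Red"

fun post_color :: "color \<Rightarrow> post \<Rightarrow> color" where
  "post_color cI S = Red" | "post_color cI D = Blue" | "post_color cI I = cI"

text \<open>A configuration: for each disk its post and its upward-facing colour.
  Disks are 1..N, disk 1 largest, disk N smallest.\<close>
type_synonym config = "(nat \<Rightarrow> post) \<times> (nat \<Rightarrow> color)"

definition disks :: "nat \<Rightarrow> nat set" where
  "disks N = {1..N}"

text \<open>Legal move of disk k to post q in the permanently Colored MToH.
  The disk is turned upside down, so its new downward face is its old upward face.\<close>
definition legal_move :: "nat \<Rightarrow> color \<Rightarrow> config \<Rightarrow> nat \<Rightarrow> post \<Rightarrow> bool" where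
  "legal_move N cI c k q \<longleftrightarrow>
     (let pos = fst c; up = snd c in
       k \<in> disks N \<and> pos k \<noteq> q \<and>
       \<comment> \<open>k is the top disk of its post\<close>
       (\<forall>j\<in>disks N. pos j = pos k \<longrightarrow> j \<le> k) \<and>
       \<comment> \<open>size rule: all disks on q are larger\<close>
       (\<forall>j\<in>disks N. pos j = q \<longrightarrow> j < k) \<and>
       \<comment> \<open>magnet rule: new downward face differs from upward face of top disk of q\<close>
       (\<forall>j\<in>disks N. pos j = q \<and> (\<forall>i\<in>disks N. pos i = q \<longrightarrow> i \<le> j) \<longrightarrow> up j \<noteq> up k) \<and>
       \<comment> \<open>permanent colour rule: new upward face equals colour of q\<close>
       flip (up k) = post_color cI q)"

definition do_move :: "config \<Rightarrow> nat \<Rightarrow> post \<Rightarrow> config" where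
  "do_move c k q = ((fst c)(k := q), (snd c)(k := flip (snd c k)))"

fun run :: "nat \<Rightarrow> color \<Rightarrow> config \<Rightarrow> (nat \<times> post) list \<Rightarrow> config option" where
  "run N cI c [] = Some c"
| "run N cI c ((k, q) # ms) =
     (if legal_move N cI c k q then run N cI (do_move c k q) ms else None)"

definition init_config :: config where
  "init_config = (\<lambda>_. S, \<lambda>_. Red)"

definition solved :: "nat \<Rightarrow> config \<Rightarrow> bool" where
  "solved N c \<longleftrightarrow> (\<forall>k\<in>disks N. fst c k = D)"

definition is_solution :: "nat \<Rightarrow> color \<Rightarrow> (nat \<times> post) list \<Rightarrow> bool" where
  "is_solution N cI ms \<longleftrightarrow> (\<exists>c. run N cI init_config ms = Some c \<and> solved N c)"

definition min_moves :: "nat \<Rightarrow> color \<Rightarrow> nat" where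
  "min_moves N cI = (LEAST n. \<exists>ms. is_solution N cI ms \<and> length ms = n)"

definition moves_of_disk :: "(nat \<times> post) list \<Rightarrow> nat \<Rightarrow> nat" where
  "moves_of_disk ms k = length (filter (\<lambda>m. fst m = k) ms)"

end

theory Submission
  imports Defs
begin

definition third :: "post \<Rightarrow> post \<Rightarrow> post" where
  "third a b = (if a \<noteq> S \<and> b \<noteq> S then S else if a \<noteq> I \<and> b \<noteq> I then I else D)"

lemma third_eq: "t \<noteq> a \<Longrightarrow> t \<noteq> b \<Longrightarrow> a \<noteq> b \<Longrightarrow> t = third a b"
  by (cases a; cases b; cases t; simp add: third_def)

definition amove :: "nat set \<Rightarrow> post \<Rightarrow> (nat \<Rightarrow> post) \<Rightarrow> nat \<Rightarrow> post \<Rightarrow> bool" where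
  "amove A c p k q \<longleftrightarrow> k \<in> A \<and> p k \<noteq> q \<and> (p k = c \<or> q = c) \<and>
     (\<forall>j\<in>A. p j = p k \<longrightarrow> j \<le> k) \<and> (\<forall>j\<in>A. p j = q \<longrightarrow> j < k)"

fun arun :: "nat set \<Rightarrow> post \<Rightarrow> (nat \<Rightarrow> post) \<Rightarrow> (nat \<times> post) list \<Rightarrow> (nat \<Rightarrow> post) option" where
  "arun A c p [] = Some p"
| "arun A c p ((k,q)#ms) = (if amove A c p k q then arun A c (p(k:=q)) ms else None)"

lemma arun_append:
  "arun A c p (xs @ ys) = (case arun A c p xs of None \<Rightarrow> None | Some p' \<Rightarrow> arun A c p' ys)"
  by (induction A c p xs rule: arun.induct) (auto simp: fun_upd_def)

lemma arun_in: "arun A c p ms = Some p' \<Longrightarrow> \<forall>mv\<in>set ms. fst mv \<in> A"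
  by (induction A c p ms rule: arun.induct) (auto simp: amove_def split: if_splits)

lemma arun_unch: "arun A c p ms = Some p' \<Longrightarrow> \<forall>mv\<in>set ms. fst mv \<noteq> k \<Longrightarrow> p' k = p k"
  by (induction A c p ms rule: arun.induct) (auto split: if_splits)

lemma arun_proj:
  "arun A c p ms = Some p' \<Longrightarrow> B \<subseteq> A \<Longrightarrow> \<forall>j\<in>B. q j = p j \<Longrightarrow>
   \<exists>q'. arun B c q (filter (\<lambda>mv. fst mv \<in> B) ms) = Some q' \<and> (\<forall>j\<in>B. q' j = p' j)"
proof (induction A c p ms arbitrary: q rule: arun.induct)
  case (1 A c p)
  then show ?case by auto
next
  case (2 A c p k r ms)
  from 2(2) have mv: "amove A c p k r" and rest: "arun A c (p(k:=r)) ms = Some p'"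
    by (auto split: if_splits)
  show ?case
  proof (cases "k \<in> B")
    case True
    have mvB: "amove B c q k r" using mv True 2(3,4) unfolding amove_def by auto
    have "\<forall>j\<in>B. (q(k:=r)) j = (p(k:=r)) j" using 2(4) by auto
    then have "\<exists>q'. arun B c (q(k:=r)) (filter (\<lambda>mv. fst mv \<in> B) ms) = Some q' \<and> (\<forall>j\<in>B. q' j = p' j)"
      using 2(1)[OF mv rest 2(3)] by blast
    then show ?thesis using True mvB by simp
  next
    case False
    have "\<forall>j\<in>B. q j = (p(k:=r)) j" using 2(4) False by auto
    then show ?thesis using 2(1)[OF mv rest 2(3)] False by simp
  qed
qed

lemma arun_lift:
  "arun B c p ms = Some p' \<Longrightarrow> B \<subseteq> A \<Longrightarrow> \<forall>j\<in>A-B. \<forall>k\<in>B. j < k \<Longrightarrow> arun A c p ms = Some p'"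
proof (induction B c p ms rule: arun.induct)
  case (1 B c p)
  then show ?case by simp
next
  case (2 B c p k r ms)
  from 2(2) have mv: "amove B c p k r" and rest: "arun B c (p(k:=r)) ms = Some p'"
    by (auto split: if_splits)
  have "amove A c p k r" using mv 2(3,4) unfolding amove_def
    by (metis DiffI le_less subsetD)
  then show ?case using 2(1)[OF mv rest 2(3,4)] by (simp add: fun_upd_def)
qed

definition hh :: "nat \<Rightarrow> nat" where "hh n = (\<Sum>i<n. 3^i)"

lemma hh_pow: "2 * hh n + 1 = 3^n"
  by (induction n) (auto simp: hh_def)

lemma hh_Suc: "hh (Suc n) = 3 * hh n + 1"
  using hh_pow[of n] by (simp add: hh_def)

definition cost :: "post \<Rightarrow> post \<Rightarrow> post \<Rightarrow> nat \<Rightarrow> nat" where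
  "cost c a b n = (if a = b then 0 else if a = c \<or> b = c then hh n else 2 * hh n)"

definition cnt :: "post \<Rightarrow> post \<Rightarrow> post \<Rightarrow> nat \<Rightarrow> nat" where
  "cnt c a b d = (if a = b then 0 else if a = c \<or> b = c then 3^d else 2*3^d)"

lemma cost_half: "a \<noteq> b \<Longrightarrow> (a = c \<or> b = c) \<Longrightarrow>
  cost c a (third a b) n + 1 + cost c (third a b) b n = cost c a b (Suc n)"
  by (cases a; cases b; cases c; simp add: cost_def third_def hh_Suc)

lemma cost_end: "a \<noteq> b \<Longrightarrow> a \<noteq> c \<Longrightarrow> b \<noteq> c \<Longrightarrow>
  cost c a b n + 1 + cost c b a n + 1 + cost c a b n = cost c a b (Suc n)"
  by (cases a; cases b; cases c; simp add: cost_def third_def hh_Suc)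

lemma cnt_half: "a \<noteq> b \<Longrightarrow> (a = c \<or> b = c) \<Longrightarrow>
  cnt c a (third a b) d + cnt c (third a b) b d = cnt c a b (Suc d)"
  by (cases a; cases b; cases c; simp add: cnt_def third_def)

lemma cnt_end: "a \<noteq> b \<Longrightarrow> a \<noteq> c \<Longrightarrow> b \<noteq> c \<Longrightarrow>
  cnt c a b d + cnt c b a d + cnt c a b d = cnt c a b (Suc d)"
  by (cases a; cases b; cases c; simp add: cnt_def)

lemma cost_two: "a \<noteq> b \<Longrightarrow> x \<noteq> a \<Longrightarrow> (a = c \<or> x = c) \<Longrightarrow> y \<noteq> b \<Longrightarrow> (y = c \<or> b = c) \<Longrightarrow>
  cost c a b (Suc n) \<le> cost c a (third a x) n + cost c (third a x) (third y b) n + 2 + cost c (third y b) b n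
  \<and> ((a = c \<or> b = c) \<longrightarrow> cost c a b (Suc n) < cost c a (third a x) n + cost c (third a x) (third y b) n + 2 + cost c (third y b) b n)"
  by (cases a; cases b; cases c; cases x; cases y; simp add: cost_def third_def hh_Suc)

lemma third_end: "a \<noteq> b \<Longrightarrow> a \<noteq> c \<Longrightarrow> b \<noteq> c \<Longrightarrow> x \<noteq> a \<Longrightarrow> (a = c \<or> x = c) \<Longrightarrow> third a x = b"
  by (cases a; cases b; cases c; cases x; simp add: third_def)

lemma third_end2: "a \<noteq> b \<Longrightarrow> a \<noteq> c \<Longrightarrow> b \<noteq> c \<Longrightarrow> y \<noteq> b \<Longrightarrow> (y = c \<or> b = c) \<Longrightarrow> third y b = a"
  by (cases a; cases b; cases c; cases y; simp add: third_def)

lemma mod_append[simp]: "moves_of_disk (xs @ ys) k = moves_of_disk xs k + moves_of_disk ys k"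
  by (simp add: moves_of_disk_def)

lemma mod_cons[simp]: "moves_of_disk (mv # xs) k = (if fst mv = k then 1 else 0) + moves_of_disk xs k"
  by (simp add: moves_of_disk_def)

lemma mod_nil[simp]: "moves_of_disk [] k = 0"
  by (simp add: moves_of_disk_def)

lemma len_split: "\<forall>mv\<in>set seg. fst mv \<in> insert m B \<Longrightarrow> m \<notin> B \<Longrightarrow>
  length seg = length (filter (\<lambda>mv. fst mv \<in> B) seg) + moves_of_disk seg m"
  by (induction seg) auto

lemma mod_filter: "k \<in> B \<Longrightarrow> moves_of_disk (filter (\<lambda>mv. fst mv \<in> B) seg) k = moves_of_disk seg k"
  by (induction seg) auto

lemma mod_zero: "\<forall>y\<in>set seg. fst y \<noteq> m \<Longrightarrow> moves_of_disk seg m = 0"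
  by (induction seg) auto

fun sol :: "post \<Rightarrow> post \<Rightarrow> post \<Rightarrow> nat \<Rightarrow> nat \<Rightarrow> (nat \<times> post) list" where
  "sol c a b m 0 = []"
| "sol c a b m (Suc n) = (if a = b then [] else if a = c \<or> b = c
     then sol c a (third a b) (Suc m) n @ (m,b) # sol c (third a b) b (Suc m) n
     else sol c a b (Suc m) n @ (m,c) # sol c b a (Suc m) n @ (m,b) # sol c a b (Suc m) n)"

lemma third_ne: "a \<noteq> b \<Longrightarrow> third a b \<noteq> a \<and> third a b \<noteq> b"
  by (cases a; cases b; simp add: third_def)

lemma sol_ok:
  "\<And>m a b p. (\<forall>k\<in>{m..<m+n}. p k = a) \<Longrightarrow> \<exists>p'. arun {m..<m+n} c p (sol c a b m n) = Some p'
     \<and> (\<forall>k\<in>{m..<m+n}. p' k = b) \<and> length (sol c a b m n) = cost c a b n"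
proof (induction n)
  case 0
  then show ?case by (simp add: cost_def hh_def)
next
  case (Suc n m a b p)
  define A where "A = {m..<m+Suc n}"
  define B where "B = {Suc m..<Suc m+n}"
  have AB: "A = insert m B" "m \<notin> B" "B \<subseteq> A" "m \<in> A" "\<forall>j\<in>A-B. \<forall>k\<in>B. j<k"
    by (auto simp: A_def B_def)
  have sub: "\<exists>p'. arun A c q (sol c a' b' (Suc m) n) = Some p' \<and> (\<forall>k\<in>B. p' k = b') \<and> p' m = q m
      \<and> length (sol c a' b' (Suc m) n) = cost c a' b' n"
    if h: "\<forall>k\<in>B. q k = a'" for q a' b'
  proof -
    obtain p' where r: "arun B c q (sol c a' b' (Suc m) n) = Some p'" and e: "\<forall>k\<in>B. p' k = b'"
      and l: "length (sol c a' b' (Suc m) n) = cost c a' b' n"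
      using Suc.IH[of "Suc m" q a' b'] h unfolding B_def by auto
    have "p' m = q m" using arun_unch[OF r] arun_in[OF r] AB(2) by metis
    then show ?thesis using arun_lift[OF r AB(3,5)] e l by blast
  qed
  have big: "amove A c q m x" if "\<forall>k\<in>B. q k = third (q m) x" "q m \<noteq> x" "q m = c \<or> x = c" for q x
  proof -
    have "third (q m) x \<noteq> q m \<and> third (q m) x \<noteq> x" using third_ne that(2) by blast
    then show ?thesis using that AB unfolding amove_def by auto
  qed
  have pB: "\<forall>k\<in>B. p k = a" and pm: "p m = a" using Suc.prems AB unfolding A_def by auto
  have "\<exists>p'. arun A c p (sol c a b m (Suc n)) = Some p'
     \<and> (\<forall>k\<in>A. p' k = b) \<and> length (sol c a b m (Suc n)) = cost c a b (Suc n)"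
  proof (cases "a = b")
    case True
    then show ?thesis using Suc.prems by (simp add: cost_def A_def)
  next
    case False
    show ?thesis
    proof (cases "a = c \<or> b = c")
      case True
      obtain p1 where r1: "arun A c p (sol c a (third a b) (Suc m) n) = Some p1"
        and e1: "\<forall>k\<in>B. p1 k = third a b" and m1: "p1 m = p m"
        and l1: "length (sol c a (third a b) (Suc m) n) = cost c a (third a b) n"
        using sub[OF pB] by blast
      have mv: "amove A c p1 m b" using big[of p1 b] e1 m1 pm False True by auto
      obtain p2 where r2: "arun A c (p1(m:=b)) (sol c (third a b) b (Suc m) n) = Some p2"
        and e2: "\<forall>k\<in>B. p2 k = b" and m2: "p2 m = (p1(m:=b)) m"
        and l2: "length (sol c (third a b) b (Suc m) n) = cost c (third a b) b n"
        using sub[of "p1(m:=b)" "third a b" b] e1 AB(2) by (metis fun_upd_other fun_upd_same)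
      have "arun A c p (sol c a b m (Suc n)) = Some p2"
        using r1 r2 mv False True by (simp add: arun_append)
      moreover have "\<forall>k\<in>A. p2 k = b" using e2 m2 AB(1) by auto
      moreover have "length (sol c a b m (Suc n)) = cost c a b (Suc n)"
        using l1 l2 cost_half[OF False True, of n] False True by simp
      ultimately show ?thesis by blast
    next
      case nt: False
      have t1: "third a c = b \<and> third c b = a" using False nt
        by (cases a; cases b; cases c; simp add: third_def)
      obtain p1 where r1: "arun A c p (sol c a b (Suc m) n) = Some p1"
        and e1: "\<forall>k\<in>B. p1 k = b" and m1: "p1 m = p m"
        and l1: "length (sol c a b (Suc m) n) = cost c a b n"
        using sub[OF pB] by blast
      have mv1: "amove A c p1 m c" using big[of p1 c] e1 m1 pm nt t1 by auto
      obtain p2 where r2: "arun A c (p1(m:=c)) (sol c b a (Suc m) n) = Some p2"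
        and e2: "\<forall>k\<in>B. p2 k = a" and m2: "p2 m = c"
        and l2: "length (sol c b a (Suc m) n) = cost c b a n"
        using sub[of "p1(m:=c)" b a] e1 AB(2) by (metis fun_upd_other fun_upd_same)
      have mv2: "amove A c p2 m b" using big[of p2 b] e2 m2 nt t1 by auto
      obtain p3 where r3: "arun A c (p2(m:=b)) (sol c a b (Suc m) n) = Some p3"
        and e3: "\<forall>k\<in>B. p3 k = b" and m3: "p3 m = b"
        and l3: "length (sol c a b (Suc m) n) = cost c a b n"
        using sub[of "p2(m:=b)" a b] e2 AB(2) by (metis fun_upd_other fun_upd_same)
      have "arun A c p (sol c a b m (Suc n)) = Some p3"
        using r1 r2 r3 mv1 mv2 False nt by (simp add: arun_append)
      moreover have "\<forall>k\<in>A. p3 k = b" using e3 m3 AB(1) by auto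
      moreover have "length (sol c a b m (Suc n)) = cost c a b (Suc n)"
        using l1 l2 cost_end[of a b c n] False nt by simp
      ultimately show ?thesis by blast
    qed
  qed
  then show ?case by (simp add: A_def)
qed

lemma lower:
  "\<And>m p ms p' a b. arun {m..<m+n} c p ms = Some p' \<Longrightarrow> (\<forall>k\<in>{m..<m+n}. p k = a) \<Longrightarrow>
     (\<forall>k\<in>{m..<m+n}. p' k = b) \<Longrightarrow>
   cost c a b n \<le> length ms \<and> (length ms = cost c a b n \<longrightarrow>
     (\<forall>k\<in>{m..<m+n}. moves_of_disk ms k = cnt c a b (k - m)))"
proof (induction n)
  case (0 m p ms p' a b)
  have "ms = []" using arun_in[OF 0(1)] by (cases ms) auto
  then show ?case by (simp add: cost_def hh_def)
next
  case (Suc n m p ms p' a b)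
  define A where "A = {m..<m+Suc n}"
  define B where "B = {Suc m..<Suc m+n}"
  have AB: "A = insert m B" "m \<notin> B" "B \<subseteq> A" "m \<in> A" "\<forall>k\<in>B. m < k"
    by (auto simp: A_def B_def)
  have run: "arun A c p ms = Some p'" using Suc.prems(1) by (simp add: A_def)
  have pa: "\<forall>k\<in>A. p k = a" and pb: "\<forall>k\<in>A. p' k = b" using Suc.prems(2,3) by (simp_all add: A_def)
  have IH: "cost c t1 t2 n \<le> length (filter (\<lambda>mv. fst mv \<in> B) seg) \<and>
     (length (filter (\<lambda>mv. fst mv \<in> B) seg) = cost c t1 t2 n \<longrightarrow>
       (\<forall>k\<in>B. moves_of_disk seg k = cnt c t1 t2 (k - Suc m)))
     \<and> length seg = length (filter (\<lambda>mv. fst mv \<in> B) seg) + moves_of_disk seg m"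
    if r: "arun A c q seg = Some q'" and h1: "\<forall>k\<in>B. q k = t1" and h2: "\<forall>k\<in>B. q' k = t2"
    for q seg q' t1 t2
  proof -
    obtain q'' where r2: "arun B c q (filter (\<lambda>mv. fst mv \<in> B) seg) = Some q''"
      and ag: "\<forall>j\<in>B. q'' j = q' j"
      using arun_proj[OF r AB(3), of q] by auto
    have "cost c t1 t2 n \<le> length (filter (\<lambda>mv. fst mv \<in> B) seg) \<and>
      (length (filter (\<lambda>mv. fst mv \<in> B) seg) = cost c t1 t2 n \<longrightarrow>
      (\<forall>k\<in>B. moves_of_disk (filter (\<lambda>mv. fst mv \<in> B) seg) k = cnt c t1 t2 (k - Suc m)))"
      using Suc.IH[of "Suc m" q "filter (\<lambda>mv. fst mv \<in> B) seg" q'' t1 t2] r2 h1 h2 ag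
      unfolding B_def by auto
    moreover have "length seg = length (filter (\<lambda>mv. fst mv \<in> B) seg) + moves_of_disk seg m"
      using len_split[of seg m B] arun_in[OF r] AB(1,2) by auto
    ultimately show ?thesis using mod_filter[of _ B seg] by auto
  qed
  have "cost c a b (Suc n) \<le> length ms \<and> (length ms = cost c a b (Suc n) \<longrightarrow>
     (\<forall>k\<in>A. moves_of_disk ms k = cnt c a b (k - m)))"
  proof (cases "a = b")
    case True
    then show ?thesis by (simp add: cost_def cnt_def)
  next
    case ab: False
    have "\<exists>mv\<in>set ms. fst mv = m"
    proof (rule ccontr)
      assume "\<not> ?thesis"
      then have "p' m = p m" using arun_unch[OF run] by auto
      then show False using pa pb AB(4) ab by auto
    qed
    then obtain pre mv rest where ms: "ms = pre @ mv # rest" and mvm: "fst mv = m"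
      and pre_no: "\<forall>y\<in>set pre. fst y \<noteq> m"
      using split_list_first_prop[of ms "\<lambda>mv. fst mv = m"] by blast
    obtain x where mvx: "mv = (m, x)" using mvm by (cases mv) auto
    obtain p1 where r1: "arun A c p pre = Some p1" and r1': "arun A c p1 ((m,x) # rest) = Some p'"
      using run ms mvx by (auto simp: arun_append split: option.splits)
    have mv1: "amove A c p1 m x" and r2: "arun A c (p1(m:=x)) rest = Some p'"
      using r1' by (auto split: if_splits)
    have p1m: "p1 m = a" using arun_unch[OF r1] pre_no pa AB(4) by auto
    have xa: "x \<noteq> a" and adjx: "a = c \<or> x = c" using mv1 p1m by (auto simp: amove_def)
    have p1B: "\<forall>k\<in>B. p1 k = third a x"
    proof
      fix k assume k: "k \<in> B"
      have "k \<in> A" "m < k" using k AB by auto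
      then have "p1 k \<noteq> a" "p1 k \<noteq> x" using mv1 p1m unfolding amove_def by auto
      then show "p1 k = third a x" by (metis third_eq xa)
    qed
    have pB: "\<forall>k\<in>B. p k = a" using pa AB by auto
    have p1xB: "\<forall>k\<in>B. (p1(m:=x)) k = third a x" using p1B AB(2) by auto
    note I1 = IH[OF r1 pB p1B]
    have mpre: "moves_of_disk pre m = 0" using mod_zero[OF pre_no] .
    show ?thesis
    proof (cases "\<exists>mv\<in>set rest. fst mv = m")
      case False
      then have rest_no: "\<forall>y\<in>set rest. fst y \<noteq> m" by auto
      have "p' m = x" using arun_unch[OF r2 rest_no] by simp
      then have xb: "x = b" using pb AB(4) by auto
      have pbB: "\<forall>k\<in>B. p' k = b" using pb AB by auto
      note I2 = IH[OF r2 p1xB pbB, unfolded xb]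
      note I1b = I1[unfolded xb]
      have mrest: "moves_of_disk rest m = 0" using mod_zero[OF rest_no] .
      have adj: "a = c \<or> b = c" using adjx xb by auto
      have cs: "cost c a (third a b) n + 1 + cost c (third a b) b n = cost c a b (Suc n)"
        using cost_half[OF ab adj] .
      have len: "length ms = length pre + 1 + length rest" using ms by simp
      show ?thesis
      proof
        show "cost c a b (Suc n) \<le> length ms" using I1b I2 cs len mpre mrest xb by linarith
        show "length ms = cost c a b (Suc n) \<longrightarrow> (\<forall>k\<in>A. moves_of_disk ms k = cnt c a b (k - m))"
        proof (intro impI ballI)
          fix k assume eq: "length ms = cost c a b (Suc n)" and k: "k \<in> A"
          have t1: "length (filter (\<lambda>mv. fst mv \<in> B) pre) = cost c a (third a b) n"
            and t2: "length (filter (\<lambda>mv. fst mv \<in> B) rest) = cost c (third a b) b n"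
            using I1b I2 cs len mpre mrest xb eq by linarith+
          show "moves_of_disk ms k = cnt c a b (k - m)"
          proof (cases "k = m")
            case True
            then show ?thesis using ms mvx mpre mrest adj ab by (simp add: cnt_def)
          next
            case km: False
            then have kB: "k \<in> B" using k AB by auto
            have "k - m = Suc (k - Suc m)" using AB(5) kB by auto
            then have "cnt c a b (k - m) = cnt c a (third a b) (k - Suc m) + cnt c (third a b) b (k - Suc m)"
              using cnt_half[OF ab adj] by simp
            then show ?thesis using I1b I2 t1 t2 kB km ms mvx xb by simp
          qed
        qed
      qed
    next
      case True
      then obtain mid mv2 suf where rest: "rest = mid @ mv2 # suf" and mvm2: "fst mv2 = m"
        and suf_no: "\<forall>z\<in>set suf. fst z \<noteq> m"
        using split_list_last_prop[of rest "\<lambda>mv. fst mv = m"] by blast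
      obtain y2 where mvy: "mv2 = (m, y2)" using mvm2 by (cases mv2) auto
      obtain p2 where r3: "arun A c (p1(m:=x)) mid = Some p2" and r3': "arun A c p2 ((m,y2) # suf) = Some p'"
        using r2 rest mvy by (auto simp: arun_append split: option.splits)
      have mv2: "amove A c p2 m y2" and r4: "arun A c (p2(m:=y2)) suf = Some p'"
        using r3' by (auto split: if_splits)
      have "p' m = y2" using arun_unch[OF r4 suf_no] by simp
      then have yb: "y2 = b" using pb AB(4) by auto
      define y where "y = p2 m"
      have yb2: "y \<noteq> b" and adjy: "y = c \<or> b = c" using mv2 yb by (auto simp: amove_def y_def)
      have p2B: "\<forall>k\<in>B. p2 k = third y b"
      proof
        fix k assume k: "k \<in> B"
        have "k \<in> A" "m < k" using k AB by auto
        then have "p2 k \<noteq> y" "p2 k \<noteq> b" using mv2 yb unfolding amove_def y_def by auto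
        then show "p2 k = third y b" by (metis third_eq yb2)
      qed
      have p2bB: "\<forall>k\<in>B. (p2(m:=b)) k = third y b" using p2B AB(2) by auto
      have pbB: "\<forall>k\<in>B. p' k = b" using pb AB by auto
      note I2 = IH[OF r3 p1xB p2B]
      note I3 = IH[OF r4[unfolded yb] p2bB pbB]
      have msuf: "moves_of_disk suf m = 0" using mod_zero[OF suf_no] .
      have len: "length ms = length pre + 1 + length mid + 1 + length suf" using ms rest by simp
      have ct: "cost c a b (Suc n) \<le> cost c a (third a x) n + cost c (third a x) (third y b) n + 2 + cost c (third y b) b n
        \<and> ((a = c \<or> b = c) \<longrightarrow> cost c a b (Suc n) < cost c a (third a x) n + cost c (third a x) (third y b) n + 2 + cost c (third y b) b n)"
        using cost_two[OF ab xa adjx yb2 adjy] .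
      show ?thesis
      proof
        show "cost c a b (Suc n) \<le> length ms" using I1 I2 I3 ct len mpre msuf by linarith
        show "length ms = cost c a b (Suc n) \<longrightarrow> (\<forall>k\<in>A. moves_of_disk ms k = cnt c a b (k - m))"
        proof (intro impI ballI)
          fix k assume eq: "length ms = cost c a b (Suc n)" and k: "k \<in> A"
          have ends: "a \<noteq> c" "b \<noteq> c" using I1 I2 I3 ct len mpre msuf eq by linarith+
          have tx: "third a x = b" using third_end[OF ab ends xa adjx] .
          have ty: "third y b = a" using third_end2[OF ab ends yb2 adjy] .
          have t1: "length (filter (\<lambda>mv. fst mv \<in> B) pre) = cost c a b n"
            and t2: "length (filter (\<lambda>mv. fst mv \<in> B) mid) = cost c b a n"
            and t3: "length (filter (\<lambda>mv. fst mv \<in> B) suf) = cost c a b n"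
            and t4: "moves_of_disk mid m = 0"
            using I1 I2 I3 ct len mpre msuf eq unfolding tx ty by linarith+
          show "moves_of_disk ms k = cnt c a b (k - m)"
          proof (cases "k = m")
            case True
            then show ?thesis using ms rest mvx mvy mpre msuf t4 ends ab by (simp add: cnt_def)
          next
            case km: False
            then have kB: "k \<in> B" using k AB by auto
            have "k - m = Suc (k - Suc m)" using AB(5) kB by auto
            then have "cnt c a b (k - m) = cnt c a b (k - Suc m) + cnt c b a (k - Suc m) + cnt c a b (k - Suc m)"
              using cnt_end[OF ab ends] by simp
            then show ?thesis using I1 I2 I3 t1 t2 t3 kB km ms rest mvx mvy unfolding tx ty by simp
          qed
        qed
      qed
    qed
  qed
  then show ?case by (simp add: A_def)
qed

definition ctrc :: "color \<Rightarrow> post" where "ctrc cI = (if cI = Blue then S else D)"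

definition cinv :: "nat \<Rightarrow> color \<Rightarrow> config \<Rightarrow> bool" where
  "cinv N cI c \<longleftrightarrow> (\<forall>k\<in>disks N. snd c k = post_color cI (fst c k))"

lemma adj_iff: "(p \<noteq> q \<and> (p = ctrc cI \<or> q = ctrc cI)) \<longleftrightarrow> post_color cI p \<noteq> post_color cI q"
  by (cases cI; cases p; cases q; simp add: ctrc_def)

lemma flip_iff: "flip u = v \<longleftrightarrow> u \<noteq> v"
  by (cases u; cases v; simp)

lemma legal_iff: "cinv N cI c \<Longrightarrow> legal_move N cI c k q = amove (disks N) (ctrc cI) (fst c) k q"
proof -
  assume inv: "cinv N cI c"
  obtain pos up where c: "c = (pos, up)" by (cases c)
  have upk: "\<And>j. j \<in> disks N \<Longrightarrow> up j = post_color cI (pos j)" using inv c by (simp add: cinv_def)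
  show ?thesis
  proof
    assume L: "legal_move N cI c k q"
    then have k: "k \<in> disks N" and f: "flip (up k) = post_color cI q"
      by (auto simp: legal_move_def c Let_def)
    then have "post_color cI (pos k) \<noteq> post_color cI q" using upk flip_iff by metis
    then have "pos k \<noteq> q \<and> (pos k = ctrc cI \<or> q = ctrc cI)" using adj_iff by metis
    then show "amove (disks N) (ctrc cI) (fst c) k q" using L
      by (auto simp: legal_move_def amove_def c Let_def)
  next
    assume M: "amove (disks N) (ctrc cI) (fst c) k q"
    then have k: "k \<in> disks N" and ad: "pos k \<noteq> q \<and> (pos k = ctrc cI \<or> q = ctrc cI)"
      by (auto simp: amove_def c)
    then have ne: "post_color cI (pos k) \<noteq> post_color cI q" using adj_iff by metis
    then have f: "flip (up k) = post_color cI q" using upk[OF k] flip_iff by metis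
    have mag: "\<forall>j\<in>disks N. pos j = q \<and> (\<forall>i\<in>disks N. pos i = q \<longrightarrow> i \<le> j) \<longrightarrow> up j \<noteq> up k"
      using upk k ne by auto
    show "legal_move N cI c k q" using M f mag
      by (auto simp: legal_move_def amove_def c Let_def)
  qed
qed

lemma run_arun: "cinv N cI c \<Longrightarrow> map_option fst (run N cI c ms) = arun (disks N) (ctrc cI) (fst c) ms"
proof (induction N cI c ms rule: run.induct)
  case (1 N cI c)
  then show ?case by simp
next
  case (2 N cI c k q ms)
  show ?case
  proof (cases "legal_move N cI c k q")
    case True
    have "cinv N cI (do_move c k q)"
      using 2(2) True by (auto simp: cinv_def do_move_def legal_move_def Let_def)
    then have "map_option fst (run N cI (do_move c k q) ms) = arun (disks N) (ctrc cI) (fst (do_move c k q)) ms"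
      using 2(1)[OF True] by blast
    moreover have "amove (disks N) (ctrc cI) (fst c) k q" using legal_iff[OF 2(2)] True by simp
    ultimately show ?thesis using True by (simp add: do_move_def)
  next
    case False
    then have "\<not> amove (disks N) (ctrc cI) (fst c) k q" using legal_iff[OF 2(2)] by simp
    then show ?thesis using False by simp
  qed
qed

lemma is_sol_iff: "is_solution N cI ms \<longleftrightarrow>
   (\<exists>p'. arun {1..<1+N} (ctrc cI) (\<lambda>_. S) ms = Some p' \<and> (\<forall>k\<in>{1..<1+N}. p' k = D))"
proof -
  have dk: "disks N = {1..<1+N}" by (auto simp: disks_def)
  have inv: "cinv N cI init_config" by (simp add: cinv_def init_config_def)
  have e: "map_option fst (run N cI init_config ms) = arun {1..<1+N} (ctrc cI) (\<lambda>_. S) ms"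
    using run_arun[OF inv] dk by (simp add: init_config_def)
  show ?thesis
  proof (cases "run N cI init_config ms")
    case None
    then show ?thesis using e by (simp add: is_solution_def)
  next
    case (Some c)
    then have a: "arun {1..<1+N} (ctrc cI) (\<lambda>_. S) ms = Some (fst c)" using e by simp
    show ?thesis using Some a dk by (auto simp: is_solution_def solved_def)
  qed
qed

lemma sum_hh: "(\<Sum>k=1..N. (3::nat)^(k-1)) = hh N"
  by (induction N) (auto simp: hh_def)

theorem mainTheorem1:
  fixes N :: nat and cI :: color
  assumes "N \<ge> 1"
  shows "min_moves N cI = (\<Sum>k=1..N. 3^(k-1))
    \<and> (\<Sum>k=1..N. (3::nat)^(k-1)) = (3^N - 1) div 2
    \<and> (\<exists>ms. is_solution N cI ms \<and> length ms = min_moves N cI)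
    \<and> (\<forall>ms. is_solution N cI ms \<and> length ms = min_moves N cI \<longrightarrow>
          (\<forall>k\<in>{1..N}. moves_of_disk ms k = 3^(k-1)))"
proof -
  define c where "c = ctrc cI"
  have half: "S \<noteq> D" "S = c \<or> D = c" by (auto simp: c_def ctrc_def)
  have cst: "cost c S D N = hh N" using half by (simp add: cost_def)
  have cn: "\<And>d. cnt c S D d = 3^d" using half by (simp add: cnt_def)
  have lb: "hh N \<le> length ms \<and> (length ms = hh N \<longrightarrow> (\<forall>k\<in>{1..N}. moves_of_disk ms k = 3^(k-1)))"
    if sl: "is_solution N cI ms" for ms
  proof -
    obtain p' where r: "arun {1..<1+N} c (\<lambda>_. S) ms = Some p'" and e: "\<forall>k\<in>{1..<1+N}. p' k = D"
      using sl unfolding is_sol_iff c_def by blast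
    have "{1..<1+N} = {1..N}" by auto
    moreover have "\<forall>k\<in>{1..<1+N}. (\<lambda>_. S) k = S" by simp
    ultimately show ?thesis using lower[OF r _ e, of S] cst cn by auto
  qed
  obtain p' where r: "arun {1..<1+N} c (\<lambda>_. S) (sol c S D 1 N) = Some p'"
    and e: "\<forall>k\<in>{1..<1+N}. p' k = D" and l: "length (sol c S D 1 N) = cost c S D N"
    using sol_ok[of 1 N "\<lambda>_. S" S c D] by auto
  have ex: "is_solution N cI (sol c S D 1 N)" unfolding is_sol_iff using r e c_def by blast
  have mm: "min_moves N cI = hh N"
    unfolding min_moves_def
  proof (rule Least_equality)
    show "\<exists>ms. is_solution N cI ms \<and> length ms = hh N" using ex l cst by auto
    show "\<And>y. \<exists>ms. is_solution N cI ms \<and> length ms = y \<Longrightarrow> hh N \<le> y" using lb by blast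
  qed
  have s3: "(3^N - 1) div 2 = hh N" using hh_pow[of N] by simp
  show ?thesis using mm sum_hh s3 ex l cst lb by auto
qed
end
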